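(* Let $r,k,p,q$ be integers, all greater than $1$, with $r\ge k$, $p\ge k+1$ and $2\le q\le\binom{p}{k}$. Then \[ F_k(r,p,q) \le r^{\binom{F_{k-1}(r,p-1,q)}{k-1}}. \] Here, when $q>\binom{p-1}{k-1}$, $F_{k-1}(r,p-1,q)$ is interpreted as $p-1$.
   Context: For positive integers $k,p,q$ with $p\ge k+1$ and $2\le q\le\binom{p}{k}$, and a positive integer $r$, $F_k(r,p,q)$ is the minimum integer $n$ such that every coloring of the edges of the complete $k$-uniform hypergraph $K_n^{(k)}$ with $r$ colors contains a copy of $K_p^{(k)}$ (i.e. a set of $p$ vertices) whose edges receive at most $q-1$ distinct colors. (For $k=1$, $K_n^{(1)}$ has the $n$ singletons as edges, so the coloring is a coloring of vertices.) *)

theory Defs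
  imports Main
begin

text \<open>Vertex set of K_n^(k) is {..<n}; its edges are the k-subsets.\<close>

definition F_good :: "nat \<Rightarrow> nat \<Rightarrow> nat \<Rightarrow> nat \<Rightarrow> nat \<Rightarrow> bool" where
  "F_good k r p q n \<longleftrightarrow>
     (\<forall>c :: nat set \<Rightarrow> nat.
        (\<forall>e. e \<subseteq> {..<n} \<and> card e = k \<longrightarrow> c e < r) \<longrightarrow>
        (\<exists>S. S \<subseteq> {..<n} \<and> card S = p \<and>
             card (c ` {e. e \<subseteq> S \<and> card e = k}) \<le> q - 1))"

definition F :: "nat \<Rightarrow> nat \<Rightarrow> nat \<Rightarrow> nat \<Rightarrow> nat" where
  "F k r p q = (LEAST n. F_good k r p q n)"

end

theory Submission imports Defs "HOL-Library.FuncSet" "HOL-Library.Ramsey" begin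
lemma pigeon:
  assumes "finite B" "finite C" "\<sigma> ` B \<subseteq> C"
  shows "\<exists>v. card B \<le> card C * card {y\<in>B. \<sigma> y = v}"
proof (cases "C = {}")
  case True
  then have "B = {}" using assms(3) by auto
  then show ?thesis by simp
next
  case False
  define M where "M = Max ((\<lambda>v. card {y\<in>B. \<sigma> y = v}) ` C)"
  have "M \<in> (\<lambda>v. card {y\<in>B. \<sigma> y = v}) ` C" unfolding M_def
    using False assms(2) by (intro Max_in) auto
  then obtain v where v: "card {y\<in>B. \<sigma> y = v} = M" by auto
  have eqB: "B = (\<Union>v\<in>C. {y\<in>B. \<sigma> y = v})" using assms(3) by auto
  have "card (\<Union>v\<in>C. {y\<in>B. \<sigma> y = v}) \<le> (\<Sum>v\<in>C. card {y\<in>B. \<sigma> y = v})"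
    by (rule card_UN_le[OF assms(2)])
  moreover have "card B = card (\<Union>v\<in>C. {y\<in>B. \<sigma> y = v})" using eqB by (rule arg_cong)
  ultimately have "card B \<le> (\<Sum>v\<in>C. card {y\<in>B. \<sigma> y = v})" by linarith
  also have "\<dots> \<le> (\<Sum>v\<in>C. M)"
    by (rule sum_mono) (use assms(2) in \<open>auto simp: M_def\<close>)
  also have "\<dots> = card C * M" by simp
  finally show ?thesis using v by metis
qed

definition bnd :: "nat \<Rightarrow> nat \<Rightarrow> nat \<Rightarrow> nat \<Rightarrow> nat" where
  "bnd r j m i = (if i < j then r ^ (m choose j) - i else r ^ ((m choose j) - (i choose j)))"

lemma bnd_pos:
  assumes "j \<ge> 1" "r > j" "m \<ge> j" "i \<le> m"
  shows "bnd r j m i \<ge> 1"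
proof -
  have E: "m choose j \<ge> 1" using assms by (simp add: Suc_leI)
  have "r ^ (m choose j) \<ge> r ^ 1" using E assms by (intro power_increasing) auto
  then show ?thesis using assms by (auto simp: bnd_def)
qed

lemma bnd_step:
  assumes "j \<ge> 1" "r > j" "m \<ge> j" "i < m" "bnd r j m i - 1 \<le> r ^ (i choose (j-1)) * x"
  shows "bnd r j m (Suc i) \<le> x"
proof (rule ccontr)
  assume "\<not> ?thesis"
  then have x: "x + 1 \<le> bnd r j m (Suc i)" by simp
  define E where "E = m choose j"
  have E: "E \<ge> 1" using assms by (simp add: Suc_leI E_def)
  have "r ^ 1 \<le> r ^ E" using E assms(2) by (intro power_increasing) auto
  then have rE: "r ^ E \<ge> r" by simp
  have r2: "r \<ge> 2" using assms by linarith
  consider "Suc i < j" | "Suc i = j" | "i \<ge> j" by linarith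
  then show False
  proof cases
    case 1
    have "i choose (j-1) = 0" using 1 by simp
    then have "r ^ (i choose (j-1)) = 1" by (simp only: power_0)
    then have "bnd r j m i - 1 \<le> x" using assms(5) by (simp only: mult_1)
    then show ?thesis using x 1 rE assms(2) by (simp add: bnd_def E_def)
  next
    case 2
    have b1: "bnd r j m (Suc i) = r ^ (E - 1)" using 2 by (simp add: bnd_def E_def)
    have b0: "bnd r j m i = r ^ E - i" using 2 by (simp add: bnd_def E_def)
    have ji: "j - 1 = i" using 2 by simp
    have ch: "i choose (j-1) = 1" unfolding ji by simp
    have "r ^ E = r ^ Suc (E - 1)" using E by simp
    then have pe: "r ^ (E - 1) * r = r ^ E" by (simp add: power_Suc2)
    have "x * r \<le> (r ^ (E-1) - 1) * r" using x b1 by (intro mult_le_mono1) linarith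
    also have "\<dots> = r ^ E - r" using pe by (simp add: diff_mult_distrib)
    finally have "x * r \<le> r ^ E - r" .
    moreover have "r ^ E - i - 1 \<le> r * x" using assms(5) b0 ch by simp
    ultimately show False using 2 assms(2) rE by (simp add: mult.commute)
  next
    case 3
    define e where "e = i choose (j-1)"
    have e1: "e \<ge> 1" using 3 by (simp add: e_def Suc_leI)
    have "r ^ 1 \<le> r ^ e" using e1 r2 by (intro power_increasing) auto
    then have re: "r ^ e \<ge> 2" using r2 by simp
    have jj: "j = Suc (j - 1)" using assms(1) by simp
    have "Suc i choose Suc (j-1) = (i choose (j-1)) + (i choose Suc (j-1))" by (rule binomial_Suc_Suc)
    then have cs: "Suc i choose j = (i choose j) + e" using jj e_def by (metis add.commute)
    have le: "Suc i choose j \<le> E" unfolding E_def using assms(4) by (intro binomial_right_mono) simp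
    define D where "D = E - (Suc i choose j)"
    have b1: "bnd r j m (Suc i) = r ^ D" using 3 by (simp add: bnd_def E_def D_def)
    have b0: "bnd r j m i = r ^ (D + e)" using 3 le cs by (simp add: bnd_def E_def D_def not_less)
    have "x * r ^ e \<le> (r ^ D - 1) * r ^ e" using x b1 by (intro mult_le_mono1) linarith
    also have "\<dots> = r ^ (D + e) - r ^ e" by (simp add: diff_mult_distrib power_add)
    finally have "x * r ^ e \<le> r ^ (D + e) - r ^ e" .
    moreover have "r ^ (D + e) - 1 \<le> r ^ e * x" using assms(5) b0 e_def by simp
    moreover have "r ^ (D + e) \<ge> r ^ e" using assms(2) by (intro power_increasing) auto
    ultimately show False using re by (simp add: mult.commute)
  qed
qed

definition EH :: "(nat set \<Rightarrow> nat) \<Rightarrow> nat \<Rightarrow> nat set \<Rightarrow> nat set \<Rightarrow> bool" where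
  "EH c j T A \<longleftrightarrow> finite T \<and> finite A \<and> (\<forall>t\<in>T. \<forall>y\<in>A. t < y) \<and>
     (\<forall>X y y'. X \<subseteq> T \<longrightarrow> card X = j \<longrightarrow> y \<in> T \<union> A \<longrightarrow> y' \<in> T \<union> A \<longrightarrow>
        (\<forall>x\<in>X. x < y) \<longrightarrow> (\<forall>x\<in>X. x < y') \<longrightarrow> c (insert y X) = c (insert y' X))"

lemma EH_step:
  assumes eh: "EH c j T A" and ne: "A \<noteq> {}" and TN: "T \<subseteq> {..<N}" and AN: "A \<subseteq> {..<N}"
    and cT: "card T = i" and j1: "j \<ge> 1" and r1: "r \<ge> 1"
    and col: "\<forall>e. e \<subseteq> {..<N} \<and> card e = Suc j \<longrightarrow> c e < r"
  shows "\<exists>T2 A2. EH c j T2 A2 \<and> T2 \<subseteq> {..<N} \<and> A2 \<subseteq> {..<N} \<and> card T2 = Suc i \<and>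
           card A - 1 \<le> r ^ (i choose (j-1)) * card A2"
proof -
  have fT: "finite T" and fA: "finite A" and ord: "\<forall>t\<in>T. \<forall>y\<in>A. t < y"
    and hom: "\<And>X y y'. X \<subseteq> T \<Longrightarrow> card X = j \<Longrightarrow> y \<in> T \<union> A \<Longrightarrow> y' \<in> T \<union> A \<Longrightarrow>
        (\<forall>x\<in>X. x < y) \<Longrightarrow> (\<forall>x\<in>X. x < y') \<Longrightarrow> c (insert y X) = c (insert y' X)"
    using eh unfolding EH_def by blast+
  define a where "a = Min A"
  have aA: "a \<in> A" using fA ne by (simp add: a_def)
  have amin: "\<And>y. y \<in> A \<Longrightarrow> a \<le> y" using fA by (simp add: a_def)
  have aT: "a \<notin> T" using ord aA by blast
  define T2 where "T2 = insert a T"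
  define A' where "A' = A - {a}"
  define XX where "XX = {X. X \<subseteq> T2 \<and> card X = j \<and> a \<in> X}"
  have fXX: "finite XX"
  proof (rule finite_subset)
    show "XX \<subseteq> Pow T2" unfolding XX_def by blast
    show "finite (Pow T2)" using fT by (simp add: T2_def)
  qed
  have XXsub: "XX \<subseteq> insert a ` {Y. Y \<subseteq> T \<and> card Y = j - 1}"
  proof
    fix X assume X: "X \<in> XX"
    then have fX: "finite X" using j1 card.infinite unfolding XX_def by fastforce
    have "X - {a} \<subseteq> T" "card (X - {a}) = j - 1" "X = insert a (X - {a})"
      using X fX unfolding XX_def T2_def by auto
    then show "X \<in> insert a ` {Y. Y \<subseteq> T \<and> card Y = j - 1}" by blast
  qed
  have cXX: "card XX \<le> i choose (j-1)"
  proof -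
    have "card XX \<le> card (insert a ` {Y. Y \<subseteq> T \<and> card Y = j - 1})"
      using XXsub by (intro card_mono) (auto intro: finite_imageI simp: fT)
    also have "\<dots> \<le> card {Y. Y \<subseteq> T \<and> card Y = j - 1}" by (rule card_image_le) (simp add: fT)
    also have "\<dots> = i choose (j-1)" using n_subsets[OF fT] cT by simp
    finally show ?thesis .
  qed
  define \<sigma> where "\<sigma> y = restrict (\<lambda>X. c (insert y X)) XX" for y
  define C where "C = PiE XX (\<lambda>_. {..<r})"
  have sig: "\<sigma> ` A' \<subseteq> C"
  proof
    fix z assume "z \<in> \<sigma> ` A'"
    then obtain y where y: "y \<in> A'" "z = \<sigma> y" by auto
    have "\<forall>X\<in>XX. c (insert y X) < r"
    proof
      fix X assume X: "X \<in> XX"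
      have yX: "y \<notin> X" using X y ord aT unfolding XX_def T2_def A'_def by auto
      have fX: "finite X" using j1 card.infinite X unfolding XX_def by fastforce
      have "insert y X \<subseteq> {..<N}" using X y TN AN aA unfolding XX_def T2_def A'_def by auto
      moreover have "card (insert y X) = Suc j" using yX fX X unfolding XX_def by simp
      ultimately show "c (insert y X) < r" using col by blast
    qed
    then show "z \<in> C" using y unfolding C_def \<sigma>_def by auto
  qed
  have fA': "finite A'" using fA by (simp add: A'_def)
  have cC: "card C = r ^ card XX" unfolding C_def using fXX by (simp add: card_PiE)
  obtain v where v: "card A' \<le> card C * card {y\<in>A'. \<sigma> y = v}"
    using pigeon[OF fA' _ sig] fXX unfolding C_def by (auto simp: finite_PiE)
  define A2 where "A2 = {y\<in>A'. \<sigma> y = v}"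
  have "card C \<le> r ^ (i choose (j-1))" using cC cXX r1 by (simp add: power_increasing)
  then have cardb: "card A - 1 \<le> r ^ (i choose (j-1)) * card A2"
  proof -
    have "card A - 1 = card A'" using aA fA unfolding A'_def by simp
    also have "\<dots> \<le> card C * card A2" using v unfolding A2_def .
    also have "\<dots> \<le> r ^ (i choose (j-1)) * card A2" using \<open>card C \<le> _\<close> by (rule mult_le_mono1)
    finally show ?thesis .
  qed
  have EH2: "EH c j T2 A2" unfolding EH_def
  proof (intro conjI allI impI)
    show "finite T2" using fT by (simp add: T2_def)
    show "finite A2" using fA' by (simp add: A2_def)
    show "\<forall>t\<in>T2. \<forall>y\<in>A2. t < y"
      using ord amin unfolding T2_def A2_def A'_def by (auto simp: order_le_neq_trans)
  next
    fix X y y'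
    assume X: "X \<subseteq> T2" "card X = j" and y: "y \<in> T2 \<union> A2" and y': "y' \<in> T2 \<union> A2"
      and xy: "\<forall>x\<in>X. x < y" and xy': "\<forall>x\<in>X. x < y'"
    show "c (insert y X) = c (insert y' X)"
    proof (cases "a \<in> X")
      case False
      then have "X \<subseteq> T" using X T2_def by auto
      moreover have "y \<in> T \<union> A" "y' \<in> T \<union> A" using y y' aA unfolding T2_def A2_def A'_def by auto
      ultimately show ?thesis using hom X xy xy' by blast
    next
      case True
      have ay: "a < y" "a < y'" using True xy xy' by auto
      have Ta: "\<forall>t\<in>T. t < a" using ord aA by blast
      have "y \<notin> T2" "y' \<notin> T2" using ay Ta unfolding T2_def by auto
      then have "y \<in> A2" "y' \<in> A2" using y y' by auto
      then have "\<sigma> y = \<sigma> y'" unfolding A2_def by simp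
      moreover have "X \<in> XX" using X True unfolding XX_def by simp
      ultimately show ?thesis unfolding \<sigma>_def by (metis restrict_apply')
    qed
  qed
  have "T2 \<subseteq> {..<N}" using TN AN aA by (auto simp: T2_def)
  moreover have "A2 \<subseteq> {..<N}" using AN by (auto simp: A2_def A'_def)
  moreover have "card T2 = Suc i" using aT fT cT by (simp add: T2_def)
  ultimately show ?thesis using EH2 cardb by blast
qed

lemma EH_iter:
  assumes j1: "j \<ge> 1" and r1: "r \<ge> 1"
    and col: "\<forall>e. e \<subseteq> {..<N} \<and> card e = Suc j \<longrightarrow> c e < r"
    and b0: "b 0 \<le> N"
    and bs: "\<And>i. i < m \<Longrightarrow> b i \<ge> 1 \<and> (\<forall>x. b i - 1 \<le> r ^ (i choose (j-1)) * x \<longrightarrow> b (Suc i) \<le> x)"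
  shows "i \<le> m \<Longrightarrow> \<exists>T A. EH c j T A \<and> T \<subseteq> {..<N} \<and> A \<subseteq> {..<N} \<and> card T = i \<and> b i \<le> card A"
proof (induction i)
  case 0
  have "EH c j {} {..<N}" using j1 unfolding EH_def by auto
  then show ?case using b0 by fastforce
next
  case (Suc i)
  then obtain T A where TA: "EH c j T A" "T \<subseteq> {..<N}" "A \<subseteq> {..<N}" "card T = i" "b i \<le> card A"
    by auto
  have im: "i < m" using Suc by simp
  have "A \<noteq> {}" using TA(5) bs[OF im] by auto
  then obtain T2 A2 where T2: "EH c j T2 A2" "T2 \<subseteq> {..<N}" "A2 \<subseteq> {..<N}" "card T2 = Suc i"
     "card A - 1 \<le> r ^ (i choose (j-1)) * card A2"
    using EH_step[OF TA(1) _ TA(2) TA(3) TA(4) j1 r1 col] by blast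
  have "b i - 1 \<le> r ^ (i choose (j-1)) * card A2" using T2(5) TA(5) by linarith
  then have "b (Suc i) \<le> card A2" using bs[OF im] by blast
  then show ?case using T2 by blast
qed

lemma core:
  assumes j1: "j \<ge> 1" and rj: "r > j" and mj: "m \<ge> j" and p1: "p \<ge> 1"
    and G: "F_good j r (p - 1) q m"
  shows "F_good (Suc j) r p q (r ^ (m choose j))"
  unfolding F_good_def
proof (intro allI impI)
  fix c :: "nat set \<Rightarrow> nat"
  define N where "N = r ^ (m choose j)"
  assume col0: "\<forall>e. e \<subseteq> {..<r ^ (m choose j)} \<and> card e = Suc j \<longrightarrow> c e < r"
  then have col: "\<forall>e. e \<subseteq> {..<N} \<and> card e = Suc j \<longrightarrow> c e < r" by (simp add: N_def)
  have r1: "r \<ge> 1" using rj by simp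
  have "\<exists>T A. EH c j T A \<and> T \<subseteq> {..<N} \<and> A \<subseteq> {..<N} \<and> card T = m \<and> bnd r j m m \<le> card A"
  proof (rule EH_iter[OF j1 r1 col, where b = "bnd r j m" and m = m and i = m])
    show "bnd r j m 0 \<le> N" using j1 by (simp add: bnd_def N_def)
    show "\<And>i. i < m \<Longrightarrow> bnd r j m i \<ge> 1 \<and> (\<forall>x. bnd r j m i - 1 \<le> r ^ (i choose (j-1)) * x \<longrightarrow> bnd r j m (Suc i) \<le> x)"
      using bnd_pos[OF j1 rj mj] bnd_step[OF j1 rj mj] by simp
  qed simp
  then obtain T A where TA: "EH c j T A" "T \<subseteq> {..<N}" "A \<subseteq> {..<N}" "card T = m" "bnd r j m m \<le> card A"
    by blast
  have fT: "finite T" and fA: "finite A" and ord: "\<forall>t\<in>T. \<forall>y\<in>A. t < y"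
    and hom: "\<And>X y y'. X \<subseteq> T \<Longrightarrow> card X = j \<Longrightarrow> y \<in> T \<union> A \<Longrightarrow> y' \<in> T \<union> A \<Longrightarrow>
        (\<forall>x\<in>X. x < y) \<Longrightarrow> (\<forall>x\<in>X. x < y') \<Longrightarrow> c (insert y X) = c (insert y' X)"
    using TA(1) unfolding EH_def by blast+
  have "A \<noteq> {}" using TA(5) bnd_pos[OF j1 rj mj, of m] by auto
  then obtain a where aA: "a \<in> A" by blast
  have Ta: "\<forall>t\<in>T. t < a" using ord aA by blast
  obtain g where g: "bij_betw g {..<m} T"
    using ex_bij_betw_nat_finite[OF fT] TA(4) by (auto simp: atLeast0LessThan)
  have ginj: "inj_on g {..<m}" and gim: "g ` {..<m} = T" using g by (auto simp: bij_betw_def)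
  define d where "d Y = c (insert a (g ` Y))" for Y
  have dcol: "\<forall>Y. Y \<subseteq> {..<m} \<and> card Y = j \<longrightarrow> d Y < r"
  proof (intro allI impI)
    fix Y assume Y: "Y \<subseteq> {..<m} \<and> card Y = j"
    have cg: "card (g ` Y) = j" using Y ginj by (metis card_image inj_on_subset)
    have gT: "g ` Y \<subseteq> T" using Y gim by auto
    have fg: "finite (g ` Y)" using gT fT finite_subset by blast
    have "a \<notin> g ` Y" using gT Ta by auto
    then have "card (insert a (g ` Y)) = Suc j" using cg fg by simp
    moreover have "insert a (g ` Y) \<subseteq> {..<N}" using gT TA(2) TA(3) aA by auto
    ultimately show "d Y < r" using col unfolding d_def by blast
  qed
  obtain S0 where S0: "S0 \<subseteq> {..<m}" "card S0 = p - 1"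
      "card (d ` {e. e \<subseteq> S0 \<and> card e = j}) \<le> q - 1"
    using G dcol unfolding F_good_def by blast
  define S where "S = insert a (g ` S0)"
  have gS0: "g ` S0 \<subseteq> T" using S0(1) gim by auto
  have fS0: "finite S0" using S0(1) finite_subset by blast
  have aS0: "a \<notin> g ` S0" using gS0 Ta by auto
  have cS: "card S = p" unfolding S_def using aS0 fS0 S0(2) p1 ginj S0(1)
    by (simp add: card_image inj_on_subset)
  have SN: "S \<subseteq> {..<N}" unfolding S_def using gS0 TA(2) TA(3) aA by auto
  have sub: "c ` {e. e \<subseteq> S \<and> card e = Suc j} \<subseteq> d ` {e. e \<subseteq> S0 \<and> card e = j}"
  proof
    fix z assume "z \<in> c ` {e. e \<subseteq> S \<and> card e = Suc j}"
    then obtain e where e: "e \<subseteq> S" "card e = Suc j" "z = c e" by auto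
    have fe: "finite e" and nee: "e \<noteq> {}" using e(2) card.infinite by fastforce+
    define b where "b = Max e"
    have be: "b \<in> e" using fe nee by (simp add: b_def)
    define X where "X = e - {b}"
    have cX: "card X = j" using e(2) be fe by (simp add: X_def)
    have Xb: "\<forall>x\<in>X. x < b" using fe unfolding X_def b_def
      by (metis DiffE Max_ge insertI1 order_le_neq_trans)
    have aX: "a \<notin> X"
    proof
      assume "a \<in> X"
      then have "a < b" using Xb by blast
      moreover have "b \<in> T \<or> b = a" using be e(1) gS0 unfolding S_def by auto
      ultimately show False using Ta by auto
    qed
    have XS0: "X \<subseteq> g ` S0" using aX e(1) unfolding X_def S_def by auto
    then have XT: "X \<subseteq> T" using gS0 by auto
    have Xa: "\<forall>x\<in>X. x < a" using XT Ta by auto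
    have bTA: "b \<in> T \<union> A" using be e(1) gS0 aA unfolding S_def by auto
    have ee: "e = insert b X" using be by (auto simp: X_def)
    have ceq: "c e = c (insert a X)" using hom[OF XT cX bTA _ Xb Xa] aA ee by simp
    define Y where "Y = {y\<in>S0. g y \<in> X}"
    have gY: "g ` Y = X" using XS0 unfolding Y_def by auto
    have YS0: "Y \<subseteq> S0" unfolding Y_def by auto
    have cY: "card Y = j" using gY cX ginj YS0 S0(1)
      by (metis card_image inj_on_subset order_trans)
    have "z = d Y" using e(3) ceq gY unfolding d_def by simp
    then show "z \<in> d ` {e. e \<subseteq> S0 \<and> card e = j}" using YS0 cY by blast
  qed
  have "finite {e. e \<subseteq> S0 \<and> card e = j}" using fS0 by simp
  then have "card (c ` {e. e \<subseteq> S \<and> card e = Suc j}) \<le> q - 1"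
    using card_mono[OF finite_imageI sub] S0(3) by linarith
  then show "\<exists>S. S \<subseteq> {..<r ^ (m choose j)} \<and> card S = p \<and>
             card (c ` {e. e \<subseteq> S \<and> card e = Suc j}) \<le> q - 1"
    using SN cS N_def by blast
qed

lemma F_good_ge:
  assumes "F_good j r p q m" "r \<ge> 1" shows "p \<le> m"
proof -
  have "\<exists>S. S \<subseteq> {..<m} \<and> card S = p \<and> card ((\<lambda>_. 0::nat) ` {e. e \<subseteq> S \<and> card e = j}) \<le> q - 1"
    using assms(1) assms(2) unfolding F_good_def by simp
  then obtain S where "S \<subseteq> {..<m}" "card S = p" by blast
  then show ?thesis by (metis card_lessThan card_mono finite_lessThan)
qed

lemma F_good_exists:
  assumes "j \<ge> 1" "r \<ge> 1" "q \<ge> 2"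
  shows "\<exists>n. F_good j r p q n"
proof -
  obtain N :: nat where N: "partn_lst {..<N} (replicate r p) j" using ramsey_full[of "replicate r p" j] by blast
  have "F_good j r p q N" unfolding F_good_def
  proof (intro allI impI)
    fix c :: "nat set \<Rightarrow> nat"
    assume col: "\<forall>e. e \<subseteq> {..<N} \<and> card e = j \<longrightarrow> c e < r"
    have "c \<in> nsets {..<N} j \<rightarrow> {..<length (replicate r p)}"
      using col by (auto simp: nsets_def)
    then obtain i where i: "i < r" "monochromatic {..<N} p j c i"
      using N unfolding partn_lst_def by auto
    then obtain H where H: "H \<in> nsets {..<N} p" "c ` nsets H j \<subseteq> {i}"
      unfolding monochromatic_def using i by auto
    have eq: "{e. e \<subseteq> H \<and> card e = j} = nsets H j"
      using assms(1) by (auto simp: nsets_def intro: card_ge_0_finite)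
    have "card (c ` {e. e \<subseteq> H \<and> card e = j}) \<le> card {i}"
      using H(2) eq by (intro card_mono) auto
    then have "card (c ` {e. e \<subseteq> H \<and> card e = j}) \<le> q - 1" using assms(3) by simp
    then show "\<exists>S. S \<subseteq> {..<N} \<and> card S = p \<and> card (c ` {e. e \<subseteq> S \<and> card e = j}) \<le> q - 1"
      using H(1) by (auto simp: nsets_def)
  qed
  then show ?thesis by blast
qed

theorem theorem1p4:
  fixes r k p q :: nat
  assumes "r > 1" "k > 1" "p > 1" "q > 1"
    and "r \<ge> k" "p \<ge> k + 1" "2 \<le> q" "q \<le> p choose k"
  shows "F k r p q \<le>
    r ^ ((if q > (p - 1) choose (k - 1) then p - 1 else F (k - 1) r (p - 1) q) choose (k - 1))"
proof -
  define j where "j = k - 1"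
  have kj: "k = Suc j" using assms(2) by (simp add: j_def)
  have j1: "j \<ge> 1" using assms(2) by (simp add: j_def)
  have rj: "r > j" using assms(5) kj by simp
  define m where "m = (if q > (p - 1) choose (k - 1) then p - 1 else F (k - 1) r (p - 1) q)"
  have G: "F_good j r (p - 1) q m"
  proof (cases "q > (p - 1) choose (k - 1)")
    case True
    then have mm: "m = p - 1" by (simp add: m_def)
    show ?thesis unfolding F_good_def mm
    proof (intro allI impI)
      fix c :: "nat set \<Rightarrow> nat"
      have "card (c ` {e. e \<subseteq> {..<p-1} \<and> card e = j}) \<le> card {e. e \<subseteq> {..<p-1} \<and> card e = j}"
        by (rule card_image_le) simp
      also have "\<dots> = (p - 1) choose j" using n_subsets[of "{..<p-1}" j] by simp
      finally have "card (c ` {e. e \<subseteq> {..<p-1} \<and> card e = j}) \<le> q - 1"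
        using True unfolding j_def by linarith
      then show "\<exists>S. S \<subseteq> {..<p - 1} \<and> card S = p - 1 \<and> card (c ` {e. e \<subseteq> S \<and> card e = j}) \<le> q - 1"
        by (intro exI[of _ "{..<p-1}"]) auto
    qed
  next
    case False
    then have mm: "m = F j r (p - 1) q" by (simp add: m_def j_def)
    have "\<exists>n. F_good j r (p - 1) q n" using F_good_exists[OF j1] assms by simp
    then show ?thesis unfolding mm F_def by (rule LeastI_ex)
  qed
  have "p - 1 \<le> m" using F_good_ge[OF G] assms(1) by simp
  then have mj: "m \<ge> j" using assms(6) kj by simp
  have "F_good k r p q (r ^ (m choose j))" using core[OF j1 rj mj _ G] assms(3) kj by simp
  then have "F k r p q \<le> r ^ (m choose j)" unfolding F_def by (rule Least_le)
  then show ?thesis by (simp add: m_def j_def)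
qed

end
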